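(* Consider the uplink model described in the context with maximum ratio combining, i.e. $\mathbf{c}_k=\Phi\mathbf{D}\hat{\mathbf{h}}_k$ for each $k\in\{1,\dots,K\}$. Then for every $k$, the uplink achievable rate satisfies $$R^U_k \ \ge\ \underline{R}^{\mathrm{MRC},U}_k=\frac{T_U}{T}\log_2\!\big(1+\mathrm{SINR}^{\mathrm{MRC},U}_k\big),$$ where $$\mathrm{SINR}^{\mathrm{MRC},U}_k=\frac{M\,p^d_k\,\rho\,\tau\,p^p_k\,\beta_k^2\,|\Phi|^2}{\Big(\sum_{k'=1}^K p^d_{k'}\beta_{k'}+\frac{\sigma^2}{|\Phi|^2\rho}\Big)\big(\rho\,\tau\,p^p_k\,\beta_k\,|\Phi|^2+\sigma^2\big)}.$$
   Context: Let $M,K,T$ be positive integers, $\tau=K$, and $T_U\ge 0$ an integer. Let $\Phi\in\mathbb{C}\setminus\{0\}$, $\rho>0$, $\sigma^2>0$, and let $\mathbf{D}\in\mathbb{C}^{M\times M}$ be a diagonal matrix whose diagonal entries have unit modulus (so $\mathbf{D}^H\mathbf{D}=\mathbf{I}_M$). For $k=1,\dots,K$ let $\beta_k>0$, pilot powers $p^p_k>0$ and data powers $p^d_k\ge 0$. The channels $\mathbf{h}_k\sim\mathcal{CN}(\mathbf{0},\beta_k\mathbf{I}_M)$, $k=1,\dots,K$, are mutually independent. The received pilot observation for device $k$ is $\mathbf{y}_k=\sqrt{\rho\tau p^p_k}\,\Phi\mathbf{D}\mathbf{h}_k+\mathbf{z}_k$, where $\mathbf{z}_k\sim\mathcal{CN}(\mathbf{0},\sigma^2\mathbf{I}_M)$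 are mutually independent and independent of the channels. The MMSE channel estimate is $$\hat{\mathbf{h}}_k=\frac{\rho\beta_k\tau p^p_k|\Phi|^2}{\rho\beta_k\tau p^p_k|\Phi|^2+\sigma^2}\mathbf{h}_k+\frac{\sqrt{\rho\tau p^p_k}\,\beta_k\Phi^*}{\rho\beta_k\tau p^p_k|\Phi|^2+\sigma^2}\mathbf{D}^H\mathbf{z}_k .$$ In the uplink data phase, $\mathbf{n}\sim\mathcal{CN}(\mathbf{0},\sigma^2\mathbf{I}_M)$ is noise independent of everything else, and $\mathbf{c}_k\in\mathbb{C}^M$ is the combining vector for device $k$. Define (all expectations over channels, pilot noise and data noise) $\mathrm{Ds}_k=\mathbb{E}\{\sqrt{\rho p^d_k}\,\Phi\,\mathbf{c}_k^H\mathbf{D}\mathbf{h}_k\}$, $|\mathrm{Ls}_k|^2=\mathbb{E}\{|\sqrt{\rho p^d_k}\,\Phi\,\mathbf{c}_k^H\mathbf{D}\mathbf{h}_k|^2\}-|\mathrm{Ds}_k|^2$, $|\mathrm{UI}_{k,k'}|^2=\mathbb{E}\{|\sqrt{\rho p^d_{k'}}\,\Phi\,\mathbf{c}_k^H\mathbf{D}\mathbf{h}_{k'}|^2\}$ for $k'\ne k$, $|\mathrm{N}_k|^2=\mathbb{E}\{|\mathbf{c}_k^H\mathbf{n}|^2\}$, and the uplink achievable rate $$R^U_k=\frac{T_U}{T}\log_2\!\Big(1+\frac{|\mathrm{Ds}_k|^2}{|\mathrm{Ls}_k|^2+\sum_{k'\neq k}|\mathrm{UI}_{k,k'}|^2+|\mathrm{N}_k|^2}\Big).$$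 *)

theory Defs
  imports "HOL-Probability.Probability"
begin

text \<open>Index set of the underlying independent real Gaussian variables:
  real/imaginary parts (bool flag: True = real part) of the channel entries h_k(i),
  of the pilot noise entries z_k(i), and of the data noise entries n(i).\<close>
datatype gidx = GH nat nat bool | GZ nat nat bool | GN nat bool

definition repart :: "bool \<Rightarrow> complex \<Rightarrow> real" where
  "repart b x = (if b then Re x else Im x)"

definition gaussian_family ::
  "(nat \<Rightarrow> nat \<Rightarrow> 'w \<Rightarrow> complex) \<Rightarrow> (nat \<Rightarrow> nat \<Rightarrow> 'w \<Rightarrow> complex) \<Rightarrow> (nat \<Rightarrow> 'w \<Rightarrow> complex)
    \<Rightarrow> gidx \<Rightarrow> 'w \<Rightarrow> real" where
  "gaussian_family h z n g = (case g of
      GH k i b \<Rightarrow> (\<lambda>w. repart b (h k i w))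
    | GZ k i b \<Rightarrow> (\<lambda>w. repart b (z k i w))
    | GN i b \<Rightarrow> (\<lambda>w. repart b (n i w)))"

definition gidx_set :: "nat \<Rightarrow> nat \<Rightarrow> gidx set" where
  "gidx_set M K =
     {GH k i b | k i b. k \<in> {1..K} \<and> i < M} \<union> {GZ k i b | k i b. k \<in> {1..K} \<and> i < M}
     \<union> {GN i b | i b. i < M}"

text \<open>Variance of each real component: CN(0,v) has independent real and imaginary
  parts, each N(0, v/2).\<close>
definition gidx_var :: "(nat \<Rightarrow> real) \<Rightarrow> real \<Rightarrow> gidx \<Rightarrow> real" where
  "gidx_var \<beta> \<sigma>2 g = (case g of GH k i b \<Rightarrow> \<beta> k / 2 | GZ k i b \<Rightarrow> \<sigma>2 / 2 | GN i b \<Rightarrow> \<sigma>2 / 2)"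

text \<open>MMSE channel estimate, entry i of hat h_k (tau is the pilot length).\<close>
definition mmse_est ::
  "real \<Rightarrow> real \<Rightarrow> real \<Rightarrow> complex \<Rightarrow> (nat \<Rightarrow> complex) \<Rightarrow> (nat \<Rightarrow> real) \<Rightarrow> (nat \<Rightarrow> real)
    \<Rightarrow> (nat \<Rightarrow> nat \<Rightarrow> 'w \<Rightarrow> complex) \<Rightarrow> (nat \<Rightarrow> nat \<Rightarrow> 'w \<Rightarrow> complex) \<Rightarrow> nat \<Rightarrow> nat \<Rightarrow> 'w \<Rightarrow> complex"
  where
  "mmse_est \<rho> \<tau> \<sigma>2 \<Phi> d \<beta> pp h z k i w =
     complex_of_real (\<rho> * \<beta> k * \<tau> * pp k * (cmod \<Phi>)\<^sup>2 / (\<rho> * \<beta> k * \<tau> * pp k * (cmod \<Phi>)\<^sup>2 + \<sigma>2))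
       * h k i w
   + complex_of_real (sqrt (\<rho> * \<tau> * pp k) * \<beta> k / (\<rho> * \<beta> k * \<tau> * pp k * (cmod \<Phi>)\<^sup>2 + \<sigma>2))
       * cnj \<Phi> * cnj (d i) * z k i w"

text \<open>Uplink achievable rate R^U_k for combining vectors c (c k i w = i-th entry of c_k).\<close>
definition uplink_rate ::
  "'w measure \<Rightarrow> nat \<Rightarrow> nat \<Rightarrow> nat \<Rightarrow> nat \<Rightarrow> complex \<Rightarrow> real \<Rightarrow> (nat \<Rightarrow> complex) \<Rightarrow> (nat \<Rightarrow> real)
    \<Rightarrow> (nat \<Rightarrow> nat \<Rightarrow> 'w \<Rightarrow> complex) \<Rightarrow> (nat \<Rightarrow> 'w \<Rightarrow> complex) \<Rightarrow> (nat \<Rightarrow> nat \<Rightarrow> 'w \<Rightarrow> complex)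
    \<Rightarrow> nat \<Rightarrow> real" where
  "uplink_rate P M K T TU \<Phi> \<rho> d pd h n c k =
    (let sig = (\<lambda>k' w. complex_of_real (sqrt (\<rho> * pd k')) * \<Phi>
                        * (\<Sum>i<M. cnj (c k i w) * d i * h k' i w));
         Ds = integral\<^sup>L P (sig k);
         Ls = integral\<^sup>L P (\<lambda>w. (cmod (sig k w))\<^sup>2) - (cmod Ds)\<^sup>2;
         UI = (\<Sum>k'\<in>{1..K} - {k}. integral\<^sup>L P (\<lambda>w. (cmod (sig k' w))\<^sup>2));
         N = integral\<^sup>L P (\<lambda>w. (cmod (\<Sum>i<M. cnj (c k i w) * n i w))\<^sup>2)
     in real TU / real T * log 2 (1 + (cmod Ds)\<^sup>2 / (Ls + UI + N)))"

end

theory Submission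
  imports Defs
begin


lemma borel_measurable_cnj' [measurable]: "cnj \<in> borel_measurable borel"
  by (intro borel_measurable_continuous_onI continuous_intros)

lemma borel_measurable_Complex' [measurable (raw)]:
  assumes "f \<in> borel_measurable M" "g \<in> borel_measurable M"
  shows "(\<lambda>x. Complex (f x) (g x)) \<in> borel_measurable M"
  using assms by (simp add: borel_measurable_complex_iff)

lemma (in prob_space) indep_var_groups:
  assumes ind: "indep_vars M' X I" and AB: "A \<inter> B = {}" "A \<subseteq> I" "B \<subseteq> I"
    and F: "F \<in> measurable (PiM A M') N1" and G: "G \<in> measurable (PiM B M') N2"
  shows "indep_var N1 (\<lambda>w. F (\<lambda>i\<in>A. X i w)) N2 (\<lambda>w. G (\<lambda>i\<in>B. X i w))"
  using indep_var_compose[OF indep_var_restrict[OF ind AB] F G] by (simp add: comp_def)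

lemma (in prob_space) indep_vars_groups:
  assumes ind: "indep_vars M' X I" and K: "\<And>j. j \<in> L \<Longrightarrow> K j \<subseteq> I" and J: "disjoint_family_on K L"
    and F: "\<And>j. j \<in> L \<Longrightarrow> F j \<in> measurable (PiM (K j) M') (N j)"
  shows "indep_vars N (\<lambda>j w. F j (\<lambda>i\<in>K j. X i w)) L"
  using indep_vars_compose2[OF indep_vars_restrict[OF ind K J] F] by simp

lemma (in prob_space) indep_var_pair:
  assumes ind: "indep_vars (\<lambda>_. borel) Y I" and "i \<in> I" "j \<in> I" "i \<noteq> j"
  shows "indep_var borel (Y i) borel (\<lambda>w. cnj (Y j w))"
proof -
  have "indep_var borel (\<lambda>w. (\<lambda>f. f i) (\<lambda>l\<in>{i}. Y l w)) borel (\<lambda>w. (\<lambda>f. cnj (f j)) (\<lambda>l\<in>{j}. Y l w))"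
  proof (rule indep_var_groups[OF ind])
    show "(\<lambda>f. cnj (f j)) \<in> borel_measurable (PiM {j} (\<lambda>_. borel))"
      by measurable
  qed (use assms in auto)
  then show ?thesis by simp
qed

lemma (in prob_space) sum_sq:
  fixes Y :: "nat \<Rightarrow> 'a \<Rightarrow> complex"
  assumes ind: "indep_vars (\<lambda>_. borel) Y {..<m}"
    and int1: "\<And>i. i < m \<Longrightarrow> integrable M (Y i)"
    and int2: "\<And>i. i < m \<Longrightarrow> integrable M (\<lambda>w. Y i w * cnj (Y i w))"
  shows "integral\<^sup>L M (\<lambda>w. (\<Sum>i<m. Y i w) * cnj (\<Sum>i<m. Y i w)) =
     (\<Sum>i<m. integral\<^sup>L M (\<lambda>w. Y i w * cnj (Y i w)) - integral\<^sup>L M (Y i) * cnj (integral\<^sup>L M (Y i)))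
     + (\<Sum>i<m. integral\<^sup>L M (Y i)) * cnj (\<Sum>i<m. integral\<^sup>L M (Y i))"
proof -
  let ?E = "\<lambda>i. integral\<^sup>L M (Y i)"
  have pair: "integrable M (\<lambda>w. Y i w * cnj (Y j w)) \<and>
     integral\<^sup>L M (\<lambda>w. Y i w * cnj (Y j w)) = ?E i * cnj (?E j) +
       (if i = j then integral\<^sup>L M (\<lambda>w. Y i w * cnj (Y i w)) - ?E i * cnj (?E i) else 0)"
    if "i < m" "j < m" for i j
  proof (cases "i = j")
    case True then show ?thesis using int2 that by simp
  next
    case False
    have iv: "indep_var borel (Y i) borel (\<lambda>w. cnj (Y j w))"
      by (rule indep_var_pair[OF ind]) (use that False in auto)
    show ?thesis using indep_var_lebesgue_integral[OF iv] indep_var_integrable[OF iv] int1 that False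
      by simp
  qed
  have expand: "(\<lambda>w. (\<Sum>i<m. Y i w) * cnj (\<Sum>i<m. Y i w)) = (\<lambda>w. \<Sum>i<m. \<Sum>j<m. Y i w * cnj (Y j w))"
    by (simp add: sum_product cnj_sum)
  then have "integral\<^sup>L M (\<lambda>w. (\<Sum>i<m. Y i w) * cnj (\<Sum>i<m. Y i w)) =
      (\<Sum>i<m. \<Sum>j<m. integral\<^sup>L M (\<lambda>w. Y i w * cnj (Y j w)))"
  proof -
    have "integral\<^sup>L M (\<lambda>w. \<Sum>i<m. \<Sum>j<m. Y i w * cnj (Y j w)) = (\<Sum>i<m. integral\<^sup>L M (\<lambda>w. \<Sum>j<m. Y i w * cnj (Y j w)))"
      by (rule Bochner_Integration.integral_sum) (use pair in auto)
    also have "\<dots> = (\<Sum>i<m. \<Sum>j<m. integral\<^sup>L M (\<lambda>w. Y i w * cnj (Y j w)))"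
      by (intro sum.cong refl Bochner_Integration.integral_sum) (use pair in auto)
    finally show ?thesis using expand by simp
  qed
  also have "\<dots> = (\<Sum>i<m. \<Sum>j<m. ?E i * cnj (?E j) +
       (if i = j then integral\<^sup>L M (\<lambda>w. Y i w * cnj (Y i w)) - ?E i * cnj (?E i) else 0))"
    using pair by (intro sum.cong refl) auto
  also have "\<dots> = (\<Sum>i<m. \<Sum>j<m. ?E i * cnj (?E j)) + (\<Sum>i<m. integral\<^sup>L M (\<lambda>w. Y i w * cnj (Y i w)) - ?E i * cnj (?E i))"
  proof -
    have "\<And>i. i < m \<Longrightarrow> (\<Sum>j<m. (if i = j then integral\<^sup>L M (\<lambda>w. Y i w * cnj (Y i w)) - ?E i * cnj (?E i) else 0))
       = integral\<^sup>L M (\<lambda>w. Y i w * cnj (Y i w)) - ?E i * cnj (?E i)"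
      by (simp add: sum.delta)
    then show ?thesis by (simp only: sum.distrib) simp
  qed
  finally show ?thesis by (simp add: sum_product cnj_sum)
qed



lemma (in prob_space) indep_groups_integral:
  fixes X :: "'i \<Rightarrow> 'a \<Rightarrow> real" and F G :: "('i \<Rightarrow> real) \<Rightarrow> 'c::{real_normed_field, banach, second_countable_topology}"
  assumes ind: "indep_vars (\<lambda>_. borel) X I" and AB: "A \<inter> B = {}" "A \<subseteq> I" "B \<subseteq> I"
    and F: "F \<in> borel_measurable (PiM A (\<lambda>_. borel))" and G: "G \<in> borel_measurable (PiM B (\<lambda>_. borel))"
    and iF: "integrable M (\<lambda>w. F (\<lambda>i\<in>A. X i w))" and iG: "integrable M (\<lambda>w. G (\<lambda>i\<in>B. X i w))"
  shows "integral\<^sup>L M (\<lambda>w. F (\<lambda>i\<in>A. X i w) * G (\<lambda>i\<in>B. X i w)) =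
           integral\<^sup>L M (\<lambda>w. F (\<lambda>i\<in>A. X i w)) * integral\<^sup>L M (\<lambda>w. G (\<lambda>i\<in>B. X i w))"
    and "integrable M (\<lambda>w. F (\<lambda>i\<in>A. X i w) * G (\<lambda>i\<in>B. X i w))"
  using indep_var_lebesgue_integral[OF indep_var_groups[OF ind AB F G] iF iG]
        indep_var_integrable[OF indep_var_groups[OF ind AB F G] iF iG] by auto

locale chan = prob_space P for P :: "'w measure" +
  fixes m KK :: nat and \<beta> :: "nat \<Rightarrow> real" and \<sigma>2 :: real
    and h z :: "nat \<Rightarrow> nat \<Rightarrow> 'w \<Rightarrow> complex" and n :: "nat \<Rightarrow> 'w \<Rightarrow> complex"
  assumes \<sigma>pos: "\<sigma>2 > 0" and \<beta>pos: "\<forall>j\<in>{1..KK}. \<beta> j > 0"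
    and dist: "\<forall>g\<in>gidx_set m KK. distributed P lborel (gaussian_family h z n g)
            (\<lambda>x. ennreal (normal_density 0 (sqrt (gidx_var \<beta> \<sigma>2 g)) x))"
    and ind: "indep_vars (\<lambda>_. borel) (gaussian_family h z n) (gidx_set m KK)"
begin

abbreviation "X \<equiv> gaussian_family h z n"

lemma var_pos: "g \<in> gidx_set m KK \<Longrightarrow> gidx_var \<beta> \<sigma>2 g > 0"
  using \<sigma>pos \<beta>pos by (auto simp: gidx_set_def gidx_var_def)

lemma X_int: assumes "g \<in> gidx_set m KK" shows "integrable P (\<lambda>w. X g w ^ p)"
proof -
  let ?s = "sqrt (gidx_var \<beta> \<sigma>2 g)"
  have s: "?s > 0" using var_pos[OF assms] by simp
  have "integrable lborel (\<lambda>x. normal_density 0 ?s x * x ^ p)"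
    using integrable_normal_moment[OF s, of 0 p] by simp
  then show ?thesis
    using distributed_integrable[OF dist[rule_format, OF assms], of "\<lambda>x. x ^ p"] by simp
qed

lemma X_mom: assumes "g \<in> gidx_set m KK"
  shows "integral\<^sup>L P (\<lambda>w. X g w ^ p) = integral\<^sup>L lborel (\<lambda>x. normal_density 0 (sqrt (gidx_var \<beta> \<sigma>2 g)) x * x ^ p)"
  using distributed_integral[OF dist[rule_format, OF assms], of "\<lambda>x. x ^ p"] by simp

lemma X_mom1: "g \<in> gidx_set m KK \<Longrightarrow> integral\<^sup>L P (X g) = 0"
  using X_mom[of g 1] integral_normal_moment_odd[of "sqrt (gidx_var \<beta> \<sigma>2 g)" 0 0] var_pos[of g] by simp

lemma X_mom2: "g \<in> gidx_set m KK \<Longrightarrow> integral\<^sup>L P (\<lambda>w. X g w ^ 2) = gidx_var \<beta> \<sigma>2 g"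
  using X_mom[of g 2] integral_normal_moment_even[of "sqrt (gidx_var \<beta> \<sigma>2 g)" 0 1] var_pos[of g] by simp

lemma X_mom3: "g \<in> gidx_set m KK \<Longrightarrow> integral\<^sup>L P (\<lambda>w. X g w ^ 3) = 0"
  using X_mom[of g 3] integral_normal_moment_odd[of "sqrt (gidx_var \<beta> \<sigma>2 g)" 0 1] var_pos[of g] by (simp add: numeral_eq_Suc)

lemma X_mom4: "g \<in> gidx_set m KK \<Longrightarrow> integral\<^sup>L P (\<lambda>w. X g w ^ 4) = 3 * (gidx_var \<beta> \<sigma>2 g)\<^sup>2"
  using X_mom[of g 4] integral_normal_moment_even[of "sqrt (gidx_var \<beta> \<sigma>2 g)" 0 2] var_pos[of g]
  by (simp add: fact_numeral power2_eq_square)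

lemma X_pair:
  assumes "a \<in> gidx_set m KK" "b \<in> gidx_set m KK" "a \<noteq> b"
  shows "integral\<^sup>L P (\<lambda>w. X a w ^ p * X b w ^ q) = integral\<^sup>L P (\<lambda>w. X a w ^ p) * integral\<^sup>L P (\<lambda>w. X b w ^ q)"
    and "integrable P (\<lambda>w. X a w ^ p * X b w ^ q)"
proof -
  note r = indep_groups_integral[OF ind, of "{a}" "{b}" "\<lambda>f. f a ^ p" "\<lambda>f. f b ^ q"]
  show "integral\<^sup>L P (\<lambda>w. X a w ^ p * X b w ^ q) = integral\<^sup>L P (\<lambda>w. X a w ^ p) * integral\<^sup>L P (\<lambda>w. X b w ^ q)"
    using r assms X_int by simp
  show "integrable P (\<lambda>w. X a w ^ p * X b w ^ q)"
    using r assms X_int by simp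
qed

end

context chan begin

lemma csrc:
  assumes ab: "a \<in> gidx_set m KK" "b \<in> gidx_set m KK" "a \<noteq> b"
    and va: "gidx_var \<beta> \<sigma>2 a = v" and vb: "gidx_var \<beta> \<sigma>2 b = v"
  shows "integrable P (\<lambda>w. Complex (X a w) (X b w))"
    and "integral\<^sup>L P (\<lambda>w. Complex (X a w) (X b w)) = 0"
    and "integrable P (\<lambda>w. Complex (X a w) (X b w) * cnj (Complex (X a w) (X b w)))"
    and "integral\<^sup>L P (\<lambda>w. Complex (X a w) (X b w) * cnj (Complex (X a w) (X b w))) = of_real (2 * v)"
    and "integrable P (\<lambda>w. (Complex (X a w) (X b w) * cnj (Complex (X a w) (X b w))) *
                          (Complex (X a w) (X b w) * cnj (Complex (X a w) (X b w))))"
    and "integral\<^sup>L P (\<lambda>w. (Complex (X a w) (X b w) * cnj (Complex (X a w) (X b w))) *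
                          (Complex (X a w) (X b w) * cnj (Complex (X a w) (X b w)))) = of_real (8 * v\<^sup>2)"
    and "integrable P (\<lambda>w. (Complex (X a w) (X b w) * cnj (Complex (X a w) (X b w))) * Complex (X a w) (X b w))"
    and "integrable P (\<lambda>w. (Complex (X a w) (X b w) * cnj (Complex (X a w) (X b w))) * cnj (Complex (X a w) (X b w)))"
proof -
  have ia: "\<And>p. integrable P (\<lambda>w. X a w ^ p)" and ib: "\<And>p. integrable P (\<lambda>w. X b w ^ p)"
    using X_int ab by auto
  have ia1: "integrable P (X a)" and ib1: "integrable P (X b)" using ia[of 1] ib[of 1] by simp_all
  have iab: "\<And>p q. integrable P (\<lambda>w. X a w ^ p * X b w ^ q)" using X_pair(2) ab by auto
  have eab: "\<And>p q. integral\<^sup>L P (\<lambda>w. X a w ^ p * X b w ^ q) = integral\<^sup>L P (\<lambda>w. X a w ^ p) * integral\<^sup>L P (\<lambda>w. X b w ^ q)"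
    using X_pair(1) ab by auto
  have i12: "integrable P (\<lambda>w. X a w * (X b w)\<^sup>2)" using iab[of 1 2] by simp
  have i21: "integrable P (\<lambda>w. (X a w)\<^sup>2 * X b w)" using iab[of 2 1] by simp
  have r1: "integrable P (\<lambda>w. X a w ^ 3 + X a w * X b w ^ 2)"
    using ia i12 by (intro Bochner_Integration.integrable_add) auto
  have r2: "integrable P (\<lambda>w. X a w ^ 2 * X b w + X b w ^ 3)"
    using ib i21 by (intro Bochner_Integration.integrable_add) auto
  have e1: "(\<lambda>w. Complex (X a w) (X b w)) = (\<lambda>w. of_real (X a w) + \<i> * of_real (X b w))"
    by (simp add: fun_eq_iff complex_eq_iff)
  show "integrable P (\<lambda>w. Complex (X a w) (X b w))"
    unfolding e1 using ia1 ib1 by (intro Bochner_Integration.integrable_add Bochner_Integration.integrable_mult_right) (simp_all add: complex_of_real_integrable_eq)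
  show "integral\<^sup>L P (\<lambda>w. Complex (X a w) (X b w)) = 0"
    unfolding e1 using ia1 ib1 X_mom1 ab
    by (subst Bochner_Integration.integral_add) (simp_all add: complex_of_real_integrable_eq)
  have e2: "(\<lambda>w. Complex (X a w) (X b w) * cnj (Complex (X a w) (X b w))) = (\<lambda>w. of_real (X a w ^ 2 + X b w ^ 2))"
    by (simp add: fun_eq_iff complex_eq_iff power2_eq_square)
  show "integrable P (\<lambda>w. Complex (X a w) (X b w) * cnj (Complex (X a w) (X b w)))"
    unfolding e2 complex_of_real_integrable_eq using ia ib by simp
  show "integral\<^sup>L P (\<lambda>w. Complex (X a w) (X b w) * cnj (Complex (X a w) (X b w))) = of_real (2 * v)"
    unfolding e2 integral_complex_of_real using ia ib X_mom2 ab va vb by simp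
  have e3: "(\<lambda>w. (Complex (X a w) (X b w) * cnj (Complex (X a w) (X b w))) *
                          (Complex (X a w) (X b w) * cnj (Complex (X a w) (X b w)))) =
       (\<lambda>w. of_real (X a w ^ 4 + 2 * (X a w ^ 2 * X b w ^ 2) + X b w ^ 4))"
    by (simp add: fun_eq_iff complex_eq_iff power2_eq_square) algebra
  show "integrable P (\<lambda>w. (Complex (X a w) (X b w) * cnj (Complex (X a w) (X b w))) *
                          (Complex (X a w) (X b w) * cnj (Complex (X a w) (X b w))))"
    unfolding e3 complex_of_real_integrable_eq using ia ib iab by simp
  show "integral\<^sup>L P (\<lambda>w. (Complex (X a w) (X b w) * cnj (Complex (X a w) (X b w))) *
                          (Complex (X a w) (X b w) * cnj (Complex (X a w) (X b w)))) = of_real (8 * v\<^sup>2)"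
  proof -
    have "integral\<^sup>L P (\<lambda>w. X a w ^ 4 + 2 * (X a w ^ 2 * X b w ^ 2) + X b w ^ 4)
        = integral\<^sup>L P (\<lambda>w. X a w ^ 4) + 2 * integral\<^sup>L P (\<lambda>w. X a w ^ 2 * X b w ^ 2) + integral\<^sup>L P (\<lambda>w. X b w ^ 4)"
      using ia ib iab by (simp add: Bochner_Integration.integral_add)
    also have "\<dots> = 3 * v\<^sup>2 + 2 * (v * v) + 3 * v\<^sup>2"
      by (simp only: eab X_mom2 X_mom4 ab va vb)
    finally show ?thesis unfolding e3 integral_complex_of_real by (simp add: power2_eq_square)
  qed
  have e4: "(\<lambda>w. (Complex (X a w) (X b w) * cnj (Complex (X a w) (X b w))) * Complex (X a w) (X b w)) =
     (\<lambda>w. of_real (X a w ^ 3 + X a w * X b w ^ 2) + \<i> * of_real (X a w ^ 2 * X b w + X b w ^ 3))"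
    by (simp add: fun_eq_iff complex_eq_iff power2_eq_square power3_eq_cube) algebra
  show "integrable P (\<lambda>w. (Complex (X a w) (X b w) * cnj (Complex (X a w) (X b w))) * Complex (X a w) (X b w))"
    unfolding e4 using ia ib iab
    using r1 r2 by (intro Bochner_Integration.integrable_add Bochner_Integration.integrable_mult_right) (simp_all only: complex_of_real_integrable_eq)
  have e5: "(\<lambda>w. (Complex (X a w) (X b w) * cnj (Complex (X a w) (X b w))) * cnj (Complex (X a w) (X b w))) =
     (\<lambda>w. of_real (X a w ^ 3 + X a w * X b w ^ 2) - \<i> * of_real (X a w ^ 2 * X b w + X b w ^ 3))"
    by (simp add: fun_eq_iff complex_eq_iff power2_eq_square power3_eq_cube) algebra
  show "integrable P (\<lambda>w. (Complex (X a w) (X b w) * cnj (Complex (X a w) (X b w))) * cnj (Complex (X a w) (X b w)))"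
    unfolding e5 using ia ib iab
    using r1 r2 by (intro Bochner_Integration.integrable_diff Bochner_Integration.integrable_mult_right) (simp_all only: complex_of_real_integrable_eq)
qed

end

context chan begin

lemma indep_cc:
  fixes \<phi> \<psi> :: "complex \<Rightarrow> complex"
  assumes mem: "a1 \<in> gidx_set m KK" "a2 \<in> gidx_set m KK" "b1 \<in> gidx_set m KK" "b2 \<in> gidx_set m KK"
    and dis: "a1 \<noteq> b1" "a1 \<noteq> b2" "a2 \<noteq> b1" "a2 \<noteq> b2"
    and m\<phi>: "\<phi> \<in> borel_measurable borel" and m\<psi>: "\<psi> \<in> borel_measurable borel"
    and i\<phi>: "integrable P (\<lambda>w. \<phi> (Complex (X a1 w) (X a2 w)))"
    and i\<psi>: "integrable P (\<lambda>w. \<psi> (Complex (X b1 w) (X b2 w)))"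
  shows "integral\<^sup>L P (\<lambda>w. \<phi> (Complex (X a1 w) (X a2 w)) * \<psi> (Complex (X b1 w) (X b2 w))) =
         integral\<^sup>L P (\<lambda>w. \<phi> (Complex (X a1 w) (X a2 w))) * integral\<^sup>L P (\<lambda>w. \<psi> (Complex (X b1 w) (X b2 w)))"
    and "integrable P (\<lambda>w. \<phi> (Complex (X a1 w) (X a2 w)) * \<psi> (Complex (X b1 w) (X b2 w)))"
proof -
  have F: "(\<lambda>f. \<phi> (Complex (f a1) (f a2))) \<in> borel_measurable (PiM {a1,a2} (\<lambda>_. borel))"
    using m\<phi> by measurable
  have G: "(\<lambda>f. \<psi> (Complex (f b1) (f b2))) \<in> borel_measurable (PiM {b1,b2} (\<lambda>_. borel))"
    using m\<psi> by measurable
  note r = indep_groups_integral[OF ind _ _ _ F G]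
  show "integral\<^sup>L P (\<lambda>w. \<phi> (Complex (X a1 w) (X a2 w)) * \<psi> (Complex (X b1 w) (X b2 w))) =
         integral\<^sup>L P (\<lambda>w. \<phi> (Complex (X a1 w) (X a2 w))) * integral\<^sup>L P (\<lambda>w. \<psi> (Complex (X b1 w) (X b2 w)))"
    using r mem dis i\<phi> i\<psi> by simp
  show "integrable P (\<lambda>w. \<phi> (Complex (X a1 w) (X a2 w)) * \<psi> (Complex (X b1 w) (X b2 w)))"
    using r mem dis i\<phi> i\<psi> by simp
qed

end

context chan begin

lemma indep_3:
  fixes \<phi> :: "complex \<Rightarrow> complex \<Rightarrow> complex" and \<psi> :: "complex \<Rightarrow> complex"
  assumes mem: "a1 \<in> gidx_set m KK" "a2 \<in> gidx_set m KK" "b1 \<in> gidx_set m KK" "b2 \<in> gidx_set m KK"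
      "c1 \<in> gidx_set m KK" "c2 \<in> gidx_set m KK"
    and dis: "c1 \<notin> {a1,a2,b1,b2}" "c2 \<notin> {a1,a2,b1,b2}"
    and m\<phi>: "(\<lambda>f. \<phi> (Complex (f a1) (f a2)) (Complex (f b1) (f b2))) \<in> borel_measurable (PiM {a1,a2,b1,b2} (\<lambda>_. borel))"
    and m\<psi>: "\<psi> \<in> borel_measurable borel"
    and i\<phi>: "integrable P (\<lambda>w. \<phi> (Complex (X a1 w) (X a2 w)) (Complex (X b1 w) (X b2 w)))"
    and i\<psi>: "integrable P (\<lambda>w. \<psi> (Complex (X c1 w) (X c2 w)))"
  shows "integral\<^sup>L P (\<lambda>w. \<phi> (Complex (X a1 w) (X a2 w)) (Complex (X b1 w) (X b2 w)) * \<psi> (Complex (X c1 w) (X c2 w))) =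
         integral\<^sup>L P (\<lambda>w. \<phi> (Complex (X a1 w) (X a2 w)) (Complex (X b1 w) (X b2 w))) * integral\<^sup>L P (\<lambda>w. \<psi> (Complex (X c1 w) (X c2 w)))"
    and "integrable P (\<lambda>w. \<phi> (Complex (X a1 w) (X a2 w)) (Complex (X b1 w) (X b2 w)) * \<psi> (Complex (X c1 w) (X c2 w)))"
proof -
  have G: "(\<lambda>f. \<psi> (Complex (f c1) (f c2))) \<in> borel_measurable (PiM {c1,c2} (\<lambda>_. borel))"
    using m\<psi> by measurable
  note r = indep_groups_integral[OF ind _ _ _ m\<phi> G]
  show "integral\<^sup>L P (\<lambda>w. \<phi> (Complex (X a1 w) (X a2 w)) (Complex (X b1 w) (X b2 w)) * \<psi> (Complex (X c1 w) (X c2 w))) =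
         integral\<^sup>L P (\<lambda>w. \<phi> (Complex (X a1 w) (X a2 w)) (Complex (X b1 w) (X b2 w))) * integral\<^sup>L P (\<lambda>w. \<psi> (Complex (X c1 w) (X c2 w)))"
    using r mem dis i\<phi> i\<psi> by simp
  show "integrable P (\<lambda>w. \<phi> (Complex (X a1 w) (X a2 w)) (Complex (X b1 w) (X b2 w)) * \<psi> (Complex (X c1 w) (X c2 w)))"
    using r mem dis i\<phi> i\<psi> by simp
qed

lemma hX: "Complex (X (GH k i True) w) (X (GH k i False) w) = h k i w"
  and zX: "Complex (X (GZ k i True) w) (X (GZ k i False) w) = z k i w"
  and nX: "Complex (X (GN i True) w) (X (GN i False) w) = n i w"
  by (simp_all add: gaussian_family_def repart_def complex_eq_iff)

lemma memH: "k \<in> {1..KK} \<Longrightarrow> i < m \<Longrightarrow> GH k i b \<in> gidx_set m KK"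
  and memZ: "k \<in> {1..KK} \<Longrightarrow> i < m \<Longrightarrow> GZ k i b \<in> gidx_set m KK"
  and memN: "i < m \<Longrightarrow> GN i b \<in> gidx_set m KK"
  by (auto simp: gidx_set_def)

lemma srcH: assumes "k \<in> {1..KK}" "i < m"
  shows "integrable P (h k i)" "integral\<^sup>L P (h k i) = 0"
    "integrable P (\<lambda>w. h k i w * cnj (h k i w))"
    "integral\<^sup>L P (\<lambda>w. h k i w * cnj (h k i w)) = of_real (\<beta> k)"
    "integrable P (\<lambda>w. (h k i w * cnj (h k i w)) * (h k i w * cnj (h k i w)))"
    "integral\<^sup>L P (\<lambda>w. (h k i w * cnj (h k i w)) * (h k i w * cnj (h k i w))) = of_real (2 * (\<beta> k)\<^sup>2)"
    "integrable P (\<lambda>w. (h k i w * cnj (h k i w)) * h k i w)"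
    "integrable P (\<lambda>w. (h k i w * cnj (h k i w)) * cnj (h k i w))"
  using csrc[of "GH k i True" "GH k i False" "\<beta> k / 2", OF memH[OF assms] memH[OF assms]]
  by (simp_all add: hX gidx_var_def power2_eq_square)

lemma srcZ: assumes "k \<in> {1..KK}" "i < m"
  shows "integrable P (z k i)" "integral\<^sup>L P (z k i) = 0"
    "integrable P (\<lambda>w. z k i w * cnj (z k i w))"
    "integral\<^sup>L P (\<lambda>w. z k i w * cnj (z k i w)) = of_real \<sigma>2"
  using csrc[of "GZ k i True" "GZ k i False" "\<sigma>2 / 2", OF memZ[OF assms] memZ[OF assms]]
  by (simp_all add: zX gidx_var_def)

lemma srcN: assumes "i < m"
  shows "integrable P (n i)" "integral\<^sup>L P (n i) = 0"
    "integrable P (\<lambda>w. n i w * cnj (n i w))"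
    "integral\<^sup>L P (\<lambda>w. n i w * cnj (n i w)) = of_real \<sigma>2"
  using csrc[of "GN i True" "GN i False" "\<sigma>2 / 2", OF memN[OF assms] memN[OF assms]]
  by (simp_all add: nX gidx_var_def)

end

lemma lin2:
  fixes f1 f2 :: "'a \<Rightarrow> complex"
  assumes "integrable M f1" "integrable M f2"
  shows "integrable M (\<lambda>w. c1 * f1 w + c2 * f2 w)"
    "integral\<^sup>L M (\<lambda>w. c1 * f1 w + c2 * f2 w) = c1 * integral\<^sup>L M f1 + c2 * integral\<^sup>L M f2"
  using assms by (simp_all add: Bochner_Integration.integral_add)

lemma lin4:
  fixes f1 f2 f3 f4 :: "'a \<Rightarrow> complex"
  assumes "integrable M f1" "integrable M f2" "integrable M f3" "integrable M f4"
  shows "integrable M (\<lambda>w. c1 * f1 w + c2 * f2 w + c3 * f3 w + c4 * f4 w)"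
    "integral\<^sup>L M (\<lambda>w. c1 * f1 w + c2 * f2 w + c3 * f3 w + c4 * f4 w) =
       c1 * integral\<^sup>L M f1 + c2 * integral\<^sup>L M f2 + c3 * integral\<^sup>L M f3 + c4 * integral\<^sup>L M f4"
  using assms by (simp_all add: Bochner_Integration.integral_add)

context chan begin

context fixes k i :: nat and A B :: complex
  assumes k: "k \<in> {1..KK}" and i: "i < m"
begin

lemma indep_hz:
  fixes \<phi> \<psi> :: "complex \<Rightarrow> complex"
  assumes "\<phi> \<in> borel_measurable borel" "\<psi> \<in> borel_measurable borel"
    "integrable P (\<lambda>w. \<phi> (h k i w))" "integrable P (\<lambda>w. \<psi> (z k i w))"
  shows "integral\<^sup>L P (\<lambda>w. \<phi> (h k i w) * \<psi> (z k i w)) = integral\<^sup>L P (\<lambda>w. \<phi> (h k i w)) * integral\<^sup>L P (\<lambda>w. \<psi> (z k i w))"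
    "integrable P (\<lambda>w. \<phi> (h k i w) * \<psi> (z k i w))"
  using indep_cc[of "GH k i True" "GH k i False" "GZ k i True" "GZ k i False" \<phi> \<psi>, OF memH[OF k i] memH[OF k i] memZ[OF k i] memZ[OF k i]]
    assms by (simp_all add: hX zX)

lemma indep_hatc:
  fixes \<psi> :: "complex \<Rightarrow> complex"
  assumes c: "c1 \<in> gidx_set m KK" "c2 \<in> gidx_set m KK"
    "c1 \<notin> {GH k i True, GH k i False, GZ k i True, GZ k i False}"
    "c2 \<notin> {GH k i True, GH k i False, GZ k i True, GZ k i False}"
    and m\<psi>: "\<psi> \<in> borel_measurable borel"
    and i1: "integrable P (\<lambda>w. cnj (A * h k i w + B * z k i w))"
    and i2: "integrable P (\<lambda>w. (A * h k i w + B * z k i w) * cnj (A * h k i w + B * z k i w))"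
    and i\<psi>: "integrable P (\<lambda>w. \<psi> (Complex (X c1 w) (X c2 w)))"
  shows "integral\<^sup>L P (\<lambda>w. cnj (A * h k i w + B * z k i w) * \<psi> (Complex (X c1 w) (X c2 w))) =
     integral\<^sup>L P (\<lambda>w. cnj (A * h k i w + B * z k i w)) * integral\<^sup>L P (\<lambda>w. \<psi> (Complex (X c1 w) (X c2 w)))"
    "integrable P (\<lambda>w. cnj (A * h k i w + B * z k i w) * \<psi> (Complex (X c1 w) (X c2 w)))"
    "integral\<^sup>L P (\<lambda>w. ((A * h k i w + B * z k i w) * cnj (A * h k i w + B * z k i w)) * \<psi> (Complex (X c1 w) (X c2 w))) =
     integral\<^sup>L P (\<lambda>w. (A * h k i w + B * z k i w) * cnj (A * h k i w + B * z k i w)) * integral\<^sup>L P (\<lambda>w. \<psi> (Complex (X c1 w) (X c2 w)))"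
    "integrable P (\<lambda>w. ((A * h k i w + B * z k i w) * cnj (A * h k i w + B * z k i w)) * \<psi> (Complex (X c1 w) (X c2 w)))"
proof -
  note mem = memH[OF k i, of True] memH[OF k i, of False] memZ[OF k i, of True] memZ[OF k i, of False]
  have m1: "(\<lambda>f. (\<lambda>x y. cnj (A * x + B * y)) (Complex (f (GH k i True)) (f (GH k i False))) (Complex (f (GZ k i True)) (f (GZ k i False))))
      \<in> borel_measurable (PiM {GH k i True, GH k i False, GZ k i True, GZ k i False} (\<lambda>_. borel))"
    by measurable
  have m2: "(\<lambda>f. (\<lambda>x y. (A * x + B * y) * cnj (A * x + B * y)) (Complex (f (GH k i True)) (f (GH k i False))) (Complex (f (GZ k i True)) (f (GZ k i False))))
      \<in> borel_measurable (PiM {GH k i True, GH k i False, GZ k i True, GZ k i False} (\<lambda>_. borel))"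
    by measurable
  note r1 = indep_3[OF mem c(1,2) c(3,4) m1 m\<psi>]
  note r2 = indep_3[OF mem c(1,2) c(3,4) m2 m\<psi>]
  show "integral\<^sup>L P (\<lambda>w. cnj (A * h k i w + B * z k i w) * \<psi> (Complex (X c1 w) (X c2 w))) =
     integral\<^sup>L P (\<lambda>w. cnj (A * h k i w + B * z k i w)) * integral\<^sup>L P (\<lambda>w. \<psi> (Complex (X c1 w) (X c2 w)))"
    "integrable P (\<lambda>w. cnj (A * h k i w + B * z k i w) * \<psi> (Complex (X c1 w) (X c2 w)))"
    using r1 i1 i\<psi> by (simp_all add: hX zX)
  show "integral\<^sup>L P (\<lambda>w. ((A * h k i w + B * z k i w) * cnj (A * h k i w + B * z k i w)) * \<psi> (Complex (X c1 w) (X c2 w))) =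
     integral\<^sup>L P (\<lambda>w. (A * h k i w + B * z k i w) * cnj (A * h k i w + B * z k i w)) * integral\<^sup>L P (\<lambda>w. \<psi> (Complex (X c1 w) (X c2 w)))"
    "integrable P (\<lambda>w. ((A * h k i w + B * z k i w) * cnj (A * h k i w + B * z k i w)) * \<psi> (Complex (X c1 w) (X c2 w)))"
    using r2 i2 i\<psi> by (simp_all add: hX zX)
qed

lemma site_basic:
  shows "integrable P (\<lambda>w. h k i w * cnj (z k i w))" "integral\<^sup>L P (\<lambda>w. h k i w * cnj (z k i w)) = 0"
    "integrable P (\<lambda>w. cnj (h k i w) * z k i w)" "integral\<^sup>L P (\<lambda>w. cnj (h k i w) * z k i w) = 0"
    "integrable P (\<lambda>w. (h k i w * cnj (h k i w) * cnj (h k i w)) * z k i w)"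
    "integral\<^sup>L P (\<lambda>w. (h k i w * cnj (h k i w) * cnj (h k i w)) * z k i w) = 0"
    "integrable P (\<lambda>w. (h k i w * cnj (h k i w) * h k i w) * cnj (z k i w))"
    "integral\<^sup>L P (\<lambda>w. (h k i w * cnj (h k i w) * h k i w) * cnj (z k i w)) = 0"
    "integrable P (\<lambda>w. (h k i w * cnj (h k i w)) * (z k i w * cnj (z k i w)))"
    "integral\<^sup>L P (\<lambda>w. (h k i w * cnj (h k i w)) * (z k i w * cnj (z k i w))) = of_real (\<beta> k * \<sigma>2)"
proof -
  note H = srcH[OF k i] and Z = srcZ[OF k i]
  have mid: "(\<lambda>x::complex. x) \<in> borel_measurable borel" by simp
  have mc: "cnj \<in> borel_measurable borel" by measurable
  have m1: "(\<lambda>x::complex. x * cnj x * cnj x) \<in> borel_measurable borel" by measurable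
  have m2: "(\<lambda>x::complex. x * cnj x * x) \<in> borel_measurable borel" by measurable
  have m3: "(\<lambda>x::complex. x * cnj x) \<in> borel_measurable borel" by measurable
  have ic: "integrable P (\<lambda>w. cnj (z k i w))" using Z(1) by simp
  have ic2: "integrable P (\<lambda>w. cnj (h k i w))" using H(1) by simp
  have ih: "integrable P (\<lambda>w. h k i w)" "integrable P (\<lambda>w. z k i w)" using H(1) Z(1) by simp_all
  show "integrable P (\<lambda>w. h k i w * cnj (z k i w))" "integral\<^sup>L P (\<lambda>w. h k i w * cnj (z k i w)) = 0"
    using indep_hz[OF mid mc ih(1) ic] Z(2) by auto
  show "integrable P (\<lambda>w. cnj (h k i w) * z k i w)" "integral\<^sup>L P (\<lambda>w. cnj (h k i w) * z k i w) = 0"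
    using indep_hz[OF mc mid ic2 ih(2)] Z(2) by auto
  show "integrable P (\<lambda>w. (h k i w * cnj (h k i w) * cnj (h k i w)) * z k i w)"
    "integral\<^sup>L P (\<lambda>w. (h k i w * cnj (h k i w) * cnj (h k i w)) * z k i w) = 0"
    using indep_hz[OF m1 mid H(8) ih(2)] Z(2) by auto
  show "integrable P (\<lambda>w. (h k i w * cnj (h k i w) * h k i w) * cnj (z k i w))"
    "integral\<^sup>L P (\<lambda>w. (h k i w * cnj (h k i w) * h k i w) * cnj (z k i w)) = 0"
    using indep_hz[OF m2 mc H(7) ic] Z(2) by auto
  show "integrable P (\<lambda>w. (h k i w * cnj (h k i w)) * (z k i w * cnj (z k i w)))"
    "integral\<^sup>L P (\<lambda>w. (h k i w * cnj (h k i w)) * (z k i w * cnj (z k i w))) = of_real (\<beta> k * \<sigma>2)"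
    using indep_hz[OF m3 m3 H(3) Z(3)] H(4) Z(4) by auto
qed

lemma site_hat:
  shows "integrable P (\<lambda>w. A * h k i w + B * z k i w)"
    "integral\<^sup>L P (\<lambda>w. A * h k i w + B * z k i w) = 0"
    "integrable P (\<lambda>w. cnj (A * h k i w + B * z k i w))"
    "integral\<^sup>L P (\<lambda>w. cnj (A * h k i w + B * z k i w)) = 0"
    "integrable P (\<lambda>w. (A * h k i w + B * z k i w) * cnj (A * h k i w + B * z k i w))"
    "integral\<^sup>L P (\<lambda>w. (A * h k i w + B * z k i w) * cnj (A * h k i w + B * z k i w))
       = A * cnj A * of_real (\<beta> k) + B * cnj B * of_real \<sigma>2"
proof -
  note H = srcH[OF k i] and Z = srcZ[OF k i] and S = site_basic
  note L = lin2[OF H(1) Z(1), of A B]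
  show i0: "integrable P (\<lambda>w. A * h k i w + B * z k i w)" and e0: "integral\<^sup>L P (\<lambda>w. A * h k i w + B * z k i w) = 0"
    using L H(2) Z(2) by simp_all
  show "integrable P (\<lambda>w. cnj (A * h k i w + B * z k i w))" using integrable_cnj[OF i0] .
  show "integral\<^sup>L P (\<lambda>w. cnj (A * h k i w + B * z k i w)) = 0"
    by (simp only: Bochner_Integration.integral_cnj e0 complex_cnj_zero)
  have e: "(\<lambda>w. (A * h k i w + B * z k i w) * cnj (A * h k i w + B * z k i w)) =
    (\<lambda>w. (A * cnj A) * (h k i w * cnj (h k i w)) + (A * cnj B) * (h k i w * cnj (z k i w))
        + (B * cnj A) * (cnj (h k i w) * z k i w) + (B * cnj B) * (z k i w * cnj (z k i w)))"
    by (simp add: fun_eq_iff algebra_simps)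
  note L4 = lin4[OF H(3) S(1) S(3) Z(3), of "A * cnj A" "A * cnj B" "B * cnj A" "B * cnj B"]
  show "integrable P (\<lambda>w. (A * h k i w + B * z k i w) * cnj (A * h k i w + B * z k i w))"
    unfolding e by (rule L4(1))
  show "integral\<^sup>L P (\<lambda>w. (A * h k i w + B * z k i w) * cnj (A * h k i w + B * z k i w))
       = A * cnj A * of_real (\<beta> k) + B * cnj B * of_real \<sigma>2"
    unfolding e L4(2) using H(4) Z(4) S(2) S(4) by simp
qed

lemma site_Y1:
  shows "integrable P (\<lambda>w. cnj (A * h k i w + B * z k i w) * h k i w)"
    "integral\<^sup>L P (\<lambda>w. cnj (A * h k i w + B * z k i w) * h k i w) = cnj A * of_real (\<beta> k)"
    "integrable P (\<lambda>w. (cnj (A * h k i w + B * z k i w) * h k i w) * cnj (cnj (A * h k i w + B * z k i w) * h k i w))"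
    "integral\<^sup>L P (\<lambda>w. (cnj (A * h k i w + B * z k i w) * h k i w) * cnj (cnj (A * h k i w + B * z k i w) * h k i w))
       = A * cnj A * of_real (2 * (\<beta> k)\<^sup>2) + B * cnj B * of_real (\<beta> k * \<sigma>2)"
proof -
  note H = srcH[OF k i] and Z = srcZ[OF k i] and S = site_basic
  have e1: "(\<lambda>w. cnj (A * h k i w + B * z k i w) * h k i w) =
     (\<lambda>w. cnj A * (h k i w * cnj (h k i w)) + cnj B * (h k i w * cnj (z k i w)))"
    by (simp add: fun_eq_iff algebra_simps)
  note L = lin2[OF H(3) S(1), of "cnj A" "cnj B"]
  show "integrable P (\<lambda>w. cnj (A * h k i w + B * z k i w) * h k i w)"
    unfolding e1 by (rule L(1))
  show "integral\<^sup>L P (\<lambda>w. cnj (A * h k i w + B * z k i w) * h k i w) = cnj A * of_real (\<beta> k)"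
    unfolding e1 L(2) using H(4) S(2) by simp
  have e2: "(\<lambda>w. (cnj (A * h k i w + B * z k i w) * h k i w) * cnj (cnj (A * h k i w + B * z k i w) * h k i w)) =
    (\<lambda>w. (A * cnj A) * ((h k i w * cnj (h k i w)) * (h k i w * cnj (h k i w)))
       + (cnj A * B) * ((h k i w * cnj (h k i w) * cnj (h k i w)) * z k i w)
       + (A * cnj B) * ((h k i w * cnj (h k i w) * h k i w) * cnj (z k i w))
       + (B * cnj B) * ((h k i w * cnj (h k i w)) * (z k i w * cnj (z k i w))))"
    by (simp add: fun_eq_iff algebra_simps)
  note L4 = lin4[OF H(5) S(5) S(7) S(9), of "A * cnj A" "cnj A * B" "A * cnj B" "B * cnj B"]
  show "integrable P (\<lambda>w. (cnj (A * h k i w + B * z k i w) * h k i w) * cnj (cnj (A * h k i w + B * z k i w) * h k i w))"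
    unfolding e2 by (rule L4(1))
  show "integral\<^sup>L P (\<lambda>w. (cnj (A * h k i w + B * z k i w) * h k i w) * cnj (cnj (A * h k i w + B * z k i w) * h k i w))
       = A * cnj A * of_real (2 * (\<beta> k)\<^sup>2) + B * cnj B * of_real (\<beta> k * \<sigma>2)"
    unfolding e2 L4(2) using H(6) S(6) S(8) S(10) by simp
qed

lemma site_Y2:
  assumes k': "k' \<in> {1..KK}" "k' \<noteq> k"
  shows "integrable P (\<lambda>w. cnj (A * h k i w + B * z k i w) * h k' i w)"
    "integral\<^sup>L P (\<lambda>w. cnj (A * h k i w + B * z k i w) * h k' i w) = 0"
    "integrable P (\<lambda>w. (cnj (A * h k i w + B * z k i w) * h k' i w) * cnj (cnj (A * h k i w + B * z k i w) * h k' i w))"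
    "integral\<^sup>L P (\<lambda>w. (cnj (A * h k i w + B * z k i w) * h k' i w) * cnj (cnj (A * h k i w + B * z k i w) * h k' i w))
       = (A * cnj A * of_real (\<beta> k) + B * cnj B * of_real \<sigma>2) * of_real (\<beta> k')"
proof -
  note H = srcH[OF k' (1) i] and T = site_hat
  have mid: "(\<lambda>x::complex. x) \<in> borel_measurable borel" by simp
  have m3: "(\<lambda>x::complex. x * cnj x) \<in> borel_measurable borel" by measurable
  have c: "GH k' i True \<in> gidx_set m KK" "GH k' i False \<in> gidx_set m KK"
    "GH k' i True \<notin> {GH k i True, GH k i False, GZ k i True, GZ k i False}"
    "GH k' i False \<notin> {GH k i True, GH k i False, GZ k i True, GZ k i False}"
    using memH[OF k'(1) i] k'(2) by auto
  have ih1: "integrable P (\<lambda>w. (\<lambda>x. x) (Complex (X (GH k' i True) w) (X (GH k' i False) w)))"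
    using H(1) by (simp add: hX)
  have ih2: "integrable P (\<lambda>w. (\<lambda>x. x * cnj x) (Complex (X (GH k' i True) w) (X (GH k' i False) w)))"
    using H(3) by (simp add: hX)
  note r1 = indep_hatc[OF c mid T(3) T(5) ih1]
  note r2 = indep_hatc[OF c m3 T(3) T(5) ih2]
  show "integrable P (\<lambda>w. cnj (A * h k i w + B * z k i w) * h k' i w)"
    using r1(2) by (simp add: hX)
  show "integral\<^sup>L P (\<lambda>w. cnj (A * h k i w + B * z k i w) * h k' i w) = 0"
    using r1(1) T(4) by (simp add: hX)
  have e: "(\<lambda>w. (cnj (A * h k i w + B * z k i w) * h k' i w) * cnj (cnj (A * h k i w + B * z k i w) * h k' i w))
     = (\<lambda>w. ((A * h k i w + B * z k i w) * cnj (A * h k i w + B * z k i w)) * (h k' i w * cnj (h k' i w)))"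
    by (simp add: fun_eq_iff mult_ac)
  show "integrable P (\<lambda>w. (cnj (A * h k i w + B * z k i w) * h k' i w) * cnj (cnj (A * h k i w + B * z k i w) * h k' i w))"
    unfolding e using r2(4) by (simp add: hX)
  show "integral\<^sup>L P (\<lambda>w. (cnj (A * h k i w + B * z k i w) * h k' i w) * cnj (cnj (A * h k i w + B * z k i w) * h k' i w))
       = (A * cnj A * of_real (\<beta> k) + B * cnj B * of_real \<sigma>2) * of_real (\<beta> k')"
    unfolding e using r2(3) T(6) H(4) by (simp add: hX)
qed

lemma site_Y3:
  shows "integrable P (\<lambda>w. cnj (C * (A * h k i w + B * z k i w)) * n i w)"
    "integral\<^sup>L P (\<lambda>w. cnj (C * (A * h k i w + B * z k i w)) * n i w) = 0"
    "integrable P (\<lambda>w. (cnj (C * (A * h k i w + B * z k i w)) * n i w) * cnj (cnj (C * (A * h k i w + B * z k i w)) * n i w))"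
    "integral\<^sup>L P (\<lambda>w. (cnj (C * (A * h k i w + B * z k i w)) * n i w) * cnj (cnj (C * (A * h k i w + B * z k i w)) * n i w))
       = C * cnj C * (A * cnj A * of_real (\<beta> k) + B * cnj B * of_real \<sigma>2) * of_real \<sigma>2"
proof -
  note N = srcN[OF i] and T = site_hat
  have mid: "(\<lambda>x::complex. x) \<in> borel_measurable borel" by simp
  have m3: "(\<lambda>x::complex. x * cnj x) \<in> borel_measurable borel" by measurable
  have c: "GN i True \<in> gidx_set m KK" "GN i False \<in> gidx_set m KK"
    "GN i True \<notin> {GH k i True, GH k i False, GZ k i True, GZ k i False}"
    "GN i False \<notin> {GH k i True, GH k i False, GZ k i True, GZ k i False}"
    using memN[OF i] by auto
  have ih1: "integrable P (\<lambda>w. (\<lambda>x. x) (Complex (X (GN i True) w) (X (GN i False) w)))"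
    using N(1) by (simp add: nX)
  have ih2: "integrable P (\<lambda>w. (\<lambda>x. x * cnj x) (Complex (X (GN i True) w) (X (GN i False) w)))"
    using N(3) by (simp add: nX)
  note r1 = indep_hatc[OF c mid T(3) T(5) ih1]
  note r2 = indep_hatc[OF c m3 T(3) T(5) ih2]
  have e1: "(\<lambda>w. cnj (C * (A * h k i w + B * z k i w)) * n i w) = (\<lambda>w. cnj C * (cnj (A * h k i w + B * z k i w) * n i w))"
    by (simp add: fun_eq_iff mult_ac)
  have i1: "integrable P (\<lambda>w. cnj (A * h k i w + B * z k i w) * n i w)" using r1(2) by (simp add: nX)
  have v1: "integral\<^sup>L P (\<lambda>w. cnj (A * h k i w + B * z k i w) * n i w) = 0" using r1(1) T(4) by (simp add: nX)
  show "integrable P (\<lambda>w. cnj (C * (A * h k i w + B * z k i w)) * n i w)"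
    unfolding e1 using i1 by simp
  show "integral\<^sup>L P (\<lambda>w. cnj (C * (A * h k i w + B * z k i w)) * n i w) = 0"
    unfolding e1 using v1 by simp
  have e: "(\<lambda>w. (cnj (C * (A * h k i w + B * z k i w)) * n i w) * cnj (cnj (C * (A * h k i w + B * z k i w)) * n i w))
     = (\<lambda>w. (C * cnj C) * (((A * h k i w + B * z k i w) * cnj (A * h k i w + B * z k i w)) * (n i w * cnj (n i w))))"
    by (simp add: fun_eq_iff mult_ac)
  have i2: "integrable P (\<lambda>w. ((A * h k i w + B * z k i w) * cnj (A * h k i w + B * z k i w)) * (n i w * cnj (n i w)))"
    using r2(4) by (simp add: nX)
  have v2: "integral\<^sup>L P (\<lambda>w. ((A * h k i w + B * z k i w) * cnj (A * h k i w + B * z k i w)) * (n i w * cnj (n i w)))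
     = (A * cnj A * of_real (\<beta> k) + B * cnj B * of_real \<sigma>2) * of_real \<sigma>2"
    using r2(3) T(6) N(4) by (simp add: nX)
  show "integrable P (\<lambda>w. (cnj (C * (A * h k i w + B * z k i w)) * n i w) * cnj (cnj (C * (A * h k i w + B * z k i w)) * n i w))"
    unfolding e using i2 by simp
  show "integral\<^sup>L P (\<lambda>w. (cnj (C * (A * h k i w + B * z k i w)) * n i w) * cnj (cnj (C * (A * h k i w + B * z k i w)) * n i w))
       = C * cnj C * (A * cnj A * of_real (\<beta> k) + B * cnj B * of_real \<sigma>2) * of_real \<sigma>2"
    unfolding e using v2 by (simp add: mult_ac)
qed

end
end


definition Ks :: "nat \<Rightarrow> nat \<Rightarrow> nat \<Rightarrow> gidx set" where
  "Ks k k' i = {GH k i True, GH k i False, GZ k i True, GZ k i False, GH k' i True, GH k' i False, GN i True, GN i False}"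

context chan begin

lemma site_indep:
  fixes Y :: "nat \<Rightarrow> 'w \<Rightarrow> complex"
  assumes k: "k \<in> {1..KK}" "k' \<in> {1..KK}"
    and F: "\<And>i. i < m \<Longrightarrow> F i \<in> borel_measurable (PiM (Ks k k' i) (\<lambda>_. borel))"
    and Y: "\<And>i w. i < m \<Longrightarrow> Y i w = F i (\<lambda>g\<in>Ks k k' i. X g w)"
  shows "indep_vars (\<lambda>_. borel) Y {..<m}"
proof -
  have "indep_vars (\<lambda>_. borel) (\<lambda>i w. F i (\<lambda>g\<in>Ks k k' i. X g w)) {..<m}"
  proof (rule indep_vars_groups[OF ind])
    show "Ks k k' i \<subseteq> gidx_set m KK" if "i \<in> {..<m}" for i
      using that k memH memZ memN by (auto simp: Ks_def)
    show "disjoint_family_on (Ks k k') {..<m}"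
      by (auto simp: disjoint_family_on_def Ks_def)
  qed (use F in auto)
  then show ?thesis
    by (rule indep_vars_cong[THEN iffD1, rotated -1]) (auto simp: Y fun_eq_iff)
qed

lemma site_indep_Y:
  fixes A :: complex and B :: "nat \<Rightarrow> complex"
  assumes k: "k \<in> {1..KK}" "k' \<in> {1..KK}"
  shows "indep_vars (\<lambda>_. borel) (\<lambda>i w. cnj (A * h k i w + B i * z k i w) * h k' i w) {..<m}"
proof (rule site_indep[OF k])
  let ?F = "\<lambda>i f. cnj (A * Complex (f (GH k i True)) (f (GH k i False)) + B i * Complex (f (GZ k i True)) (f (GZ k i False)))
     * Complex (f (GH k' i True)) (f (GH k' i False))"
  show "?F i \<in> borel_measurable (PiM (Ks k k' i) (\<lambda>_. borel))" if "i < m" for i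
    unfolding Ks_def by measurable
  show "cnj (A * h k i w + B i * z k i w) * h k' i w = ?F i (\<lambda>g\<in>Ks k k' i. X g w)" if "i < m" for i w
    by (simp add: Ks_def hX zX)
qed

lemma site_indep_N:
  fixes A :: complex and B C :: "nat \<Rightarrow> complex"
  assumes k: "k \<in> {1..KK}"
  shows "indep_vars (\<lambda>_. borel) (\<lambda>i w. cnj (C i * (A * h k i w + B i * z k i w)) * n i w) {..<m}"
proof (rule site_indep[OF k k])
  let ?F = "\<lambda>i f. cnj (C i * (A * Complex (f (GH k i True)) (f (GH k i False)) + B i * Complex (f (GZ k i True)) (f (GZ k i False))))
     * Complex (f (GN i True)) (f (GN i False))"
  show "?F i \<in> borel_measurable (PiM (Ks k k i) (\<lambda>_. borel))" if "i < m" for i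
    unfolding Ks_def by measurable
  show "cnj (C i * (A * h k i w + B i * z k i w)) * n i w = ?F i (\<lambda>g\<in>Ks k k i. X g w)" if "i < m" for i w
    by (simp add: Ks_def hX zX nX)
qed

end

theorem theorem1:
  fixes P :: "'w measure" and M K T TU :: nat and \<Phi> :: complex and \<rho> \<sigma>2 :: real
    and d :: "nat \<Rightarrow> complex" and \<beta> pp pd :: "nat \<Rightarrow> real"
    and h z :: "nat \<Rightarrow> nat \<Rightarrow> 'w \<Rightarrow> complex" and n :: "nat \<Rightarrow> 'w \<Rightarrow> complex" and k :: nat
  assumes "prob_space P"
    and "M > 0" and "K > 0" and "T > 0"
    and "\<Phi> \<noteq> 0" and "\<rho> > 0" and "\<sigma>2 > 0"
    and "\<forall>i<M. cmod (d i) = 1"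
    and "\<forall>j\<in>{1..K}. \<beta> j > 0 \<and> pp j > 0 \<and> pd j \<ge> 0"
    and "\<forall>g\<in>gidx_set M K. distributed P lborel (gaussian_family h z n g)
            (\<lambda>x. ennreal (normal_density 0 (sqrt (gidx_var \<beta> \<sigma>2 g)) x))"
    and "prob_space.indep_vars P (\<lambda>_. borel) (gaussian_family h z n) (gidx_set M K)"
    and "k \<in> {1..K}"
  shows "uplink_rate P M K T TU \<Phi> \<rho> d pd h n
           (\<lambda>j i w. \<Phi> * d i * mmse_est \<rho> (real K) \<sigma>2 \<Phi> d \<beta> pp h z j i w) k
         \<ge> real TU / real T * log 2 (1 +
             (real M * pd k * \<rho> * real K * pp k * (\<beta> k)\<^sup>2 * (cmod \<Phi>)\<^sup>2) /
             (((\<Sum>j=1..K. pd j * \<beta> j) + \<sigma>2 / ((cmod \<Phi>)\<^sup>2 * \<rho>))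
               * (\<rho> * real K * pp k * \<beta> k * (cmod \<Phi>)\<^sup>2 + \<sigma>2)))"
proof -
  have "chan P M K \<beta> \<sigma>2 h z n"
    unfolding chan_def chan_axioms_def using assms by auto
  then interpret chan P M K \<beta> \<sigma>2 h z n .
  have kK: "k \<in> {1..K}" using assms(12) .
  have \<beta>k: "\<beta> k > 0" and ppk: "pp k > 0" using assms(9) kK by auto
  have pd0: "\<And>j. j \<in> {1..K} \<Longrightarrow> pd j \<ge> 0" using assms(9) by auto
  have \<sigma>: "\<sigma>2 > 0" using assms(7) .
  have \<rho>: "\<rho> > 0" using assms(6) .
  have \<Phi>2: "(cmod \<Phi>)\<^sup>2 > 0" using assms(5) by simp
  have Kpos: "real K > 0" using assms(3) by simp
  define D where "D = \<rho> * \<beta> k * real K * pp k * (cmod \<Phi>)\<^sup>2 + \<sigma>2"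
  define a where "a = \<rho> * \<beta> k * real K * pp k * (cmod \<Phi>)\<^sup>2 / D"
  define bb where "bb = sqrt (\<rho> * real K * pp k) * \<beta> k / D"
  define A where "A = complex_of_real a"
  define B where "B = (\<lambda>i. complex_of_real bb * cnj \<Phi> * cnj (d i))"
  have Dpos: "D > 0" unfolding D_def using \<beta>k ppk \<sigma> \<rho> \<Phi>2 Kpos by (intro add_pos_pos mult_pos_pos) auto
  have mm: "mmse_est \<rho> (real K) \<sigma>2 \<Phi> d \<beta> pp h z k i w = A * h k i w + B i * z k i w" for i w
    by (simp add: mmse_est_def A_def B_def a_def bb_def D_def)
  define c where "c = (\<lambda>j i w. \<Phi> * d i * mmse_est \<rho> (real K) \<sigma>2 \<Phi> d \<beta> pp h z j i w)"
  define sig where "sig = (\<lambda>k' w. complex_of_real (sqrt (\<rho> * pd k')) * \<Phi> * (\<Sum>i<M. cnj (c k i w) * d i * h k' i w))"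
  define Cf where "Cf = (\<lambda>k'. complex_of_real (sqrt (\<rho> * pd k')) * \<Phi> * cnj \<Phi>)"
  define S where "S = (\<lambda>k' w. \<Sum>i<M. cnj (A * h k i w + B i * z k i w) * h k' i w)"
  define SN where "SN = (\<lambda>w. \<Sum>i<M. cnj ((\<Phi> * d i) * (A * h k i w + B i * z k i w)) * n i w)"
  have rate: "uplink_rate P M K T TU \<Phi> \<rho> d pd h n c k = real TU / real T * log 2 (1 + (cmod (integral\<^sup>L P (sig k)))\<^sup>2 /
     ((integral\<^sup>L P (\<lambda>w. (cmod (sig k w))\<^sup>2) - (cmod (integral\<^sup>L P (sig k)))\<^sup>2)
      + (\<Sum>k'\<in>{1..K} - {k}. integral\<^sup>L P (\<lambda>w. (cmod (sig k' w))\<^sup>2))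
      + integral\<^sup>L P (\<lambda>w. (cmod (\<Sum>i<M. cnj (c k i w) * n i w))\<^sup>2)))"
    unfolding uplink_rate_def Let_def sig_def by simp
  have dd: "cnj (d i) * d i = 1" if "i < M" for i
  proof -
    have "d i * cnj (d i) = complex_of_real ((cmod (d i))\<^sup>2)" by (rule complex_norm_square[symmetric])
    then show ?thesis using assms(8) that by (simp add: mult.commute)
  qed
  have sig_eq: "sig k' w = Cf k' * S k' w" for k' w
  proof -
    have "(\<Sum>i<M. cnj (c k i w) * d i * h k' i w) = (\<Sum>i<M. cnj \<Phi> * (cnj (A * h k i w + B i * z k i w) * h k' i w))"
    proof (rule sum.cong[OF refl])
      fix i assume "i \<in> {..<M}"
      then have 1: "cnj (d i) * d i = 1" using dd by auto
      have "cnj (c k i w) * d i * h k' i w = cnj \<Phi> * (cnj (d i) * d i) * (cnj (A * h k i w + B i * z k i w) * h k' i w)"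
        unfolding c_def mm by (simp only: complex_cnj_mult mult_ac)
      then show "cnj (c k i w) * d i * h k' i w = cnj \<Phi> * (cnj (A * h k i w + B i * z k i w) * h k' i w)"
        unfolding 1 by simp
    qed
    then show ?thesis unfolding sig_def Cf_def S_def by (simp add: sum_distrib_left mult.assoc)
  qed
  have noise_eq: "(\<Sum>i<M. cnj (c k i w) * n i w) = SN w" for w
    unfolding SN_def c_def mm by simp
  have AA: "A * cnj A = complex_of_real (a\<^sup>2)" "cnj A = A" by (simp_all add: A_def power2_eq_square)
  have BB: "B i * cnj (B i) = complex_of_real (bb\<^sup>2 * (cmod \<Phi>)\<^sup>2)" if "i < M" for i
  proof -
    have "B i * cnj (B i) = complex_of_real (bb\<^sup>2) * (\<Phi> * cnj \<Phi>) * (cnj (d i) * d i)"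
      by (simp add: B_def power2_eq_square algebra_simps)
    also have "\<dots> = complex_of_real (bb\<^sup>2 * (cmod \<Phi>)\<^sup>2)"
      using dd[OF that] by (simp add: complex_norm_square[symmetric])
    finally show ?thesis .
  qed
  have CC: "(\<Phi> * d i) * cnj (\<Phi> * d i) = complex_of_real ((cmod \<Phi>)\<^sup>2)" if "i < M" for i
  proof -
    have "(\<Phi> * d i) * cnj (\<Phi> * d i) = (\<Phi> * cnj \<Phi>) * (cnj (d i) * d i)" by (simp add: algebra_simps)
    then show ?thesis using dd[OF that] by (simp add: complex_norm_square[symmetric])
  qed
  define g' where "g' = a\<^sup>2 * \<beta> k + bb\<^sup>2 * (cmod \<Phi>)\<^sup>2 * \<sigma>2"
  have hatv: "A * cnj A * of_real (\<beta> k) + B i * cnj (B i) * of_real \<sigma>2 = complex_of_real g'" if "i < M" for i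
    using BB[OF that] AA by (simp add: g'_def)
  have ES1: "integral\<^sup>L P (\<lambda>w. S k w * cnj (S k w)) =
     complex_of_real (real M * (a\<^sup>2 * (\<beta> k)\<^sup>2 + bb\<^sup>2 * (cmod \<Phi>)\<^sup>2 * \<beta> k * \<sigma>2) + (real M * a * \<beta> k)\<^sup>2)"
  proof -
    have i1: "\<And>i. i < M \<Longrightarrow> integrable P (\<lambda>w. cnj (A * h k i w + B i * z k i w) * h k i w)"
      using site_Y1(1)[OF kK] by blast
    have i2: "\<And>i. i < M \<Longrightarrow> integrable P (\<lambda>w. (cnj (A * h k i w + B i * z k i w) * h k i w) * cnj (cnj (A * h k i w + B i * z k i w) * h k i w))"
      using site_Y1(3)[OF kK] by blast
    note r = sum_sq[OF site_indep_Y[OF kK kK] i1 i2]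
    have t1: "integral\<^sup>L P (\<lambda>w. (cnj (A * h k i w + B i * z k i w) * h k i w) * cnj (cnj (A * h k i w + B i * z k i w) * h k i w))
       - integral\<^sup>L P (\<lambda>w. cnj (A * h k i w + B i * z k i w) * h k i w) * cnj (integral\<^sup>L P (\<lambda>w. cnj (A * h k i w + B i * z k i w) * h k i w))
       = complex_of_real (a\<^sup>2 * (\<beta> k)\<^sup>2 + bb\<^sup>2 * (cmod \<Phi>)\<^sup>2 * \<beta> k * \<sigma>2)" if "i \<in> {..<M}" for i
      using site_Y1(2,4)[OF kK, of i A "B i"] BB[of i] AA that by (simp add: power2_eq_square algebra_simps)
    have t2: "integral\<^sup>L P (\<lambda>w. cnj (A * h k i w + B i * z k i w) * h k i w) = complex_of_real (a * \<beta> k)" if "i \<in> {..<M}" for i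
      using site_Y1(2)[OF kK, of i A "B i"] AA(2) that by (simp add: A_def)
    have "integral\<^sup>L P (\<lambda>w. S k w * cnj (S k w)) = (\<Sum>i<M. integral\<^sup>L P (\<lambda>w. (cnj (A * h k i w + B i * z k i w) * h k i w) * cnj (cnj (A * h k i w + B i * z k i w) * h k i w))
       - integral\<^sup>L P (\<lambda>w. cnj (A * h k i w + B i * z k i w) * h k i w) * cnj (integral\<^sup>L P (\<lambda>w. cnj (A * h k i w + B i * z k i w) * h k i w)))
       + (\<Sum>i<M. integral\<^sup>L P (\<lambda>w. cnj (A * h k i w + B i * z k i w) * h k i w)) * cnj (\<Sum>i<M. integral\<^sup>L P (\<lambda>w. cnj (A * h k i w + B i * z k i w) * h k i w))"
      unfolding S_def by (rule r)
    also have "\<dots> = (\<Sum>i<M. complex_of_real (a\<^sup>2 * (\<beta> k)\<^sup>2 + bb\<^sup>2 * (cmod \<Phi>)\<^sup>2 * \<beta> k * \<sigma>2))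
       + (\<Sum>i<M. complex_of_real (a * \<beta> k)) * cnj (\<Sum>i<M. complex_of_real (a * \<beta> k))"
      by (simp only: sum.cong[OF refl t1] sum.cong[OF refl t2])
    also have "\<dots> = complex_of_real (real M * (a\<^sup>2 * (\<beta> k)\<^sup>2 + bb\<^sup>2 * (cmod \<Phi>)\<^sup>2 * \<beta> k * \<sigma>2) + (real M * a * \<beta> k)\<^sup>2)"
      by (simp add: power2_eq_square)
    finally show ?thesis .
  qed
  have ES2: "integral\<^sup>L P (\<lambda>w. S k' w * cnj (S k' w)) = complex_of_real (real M * g' * \<beta> k')"
    if k': "k' \<in> {1..K}" "k' \<noteq> k" for k'
  proof -
    have i1: "\<And>i. i < M \<Longrightarrow> integrable P (\<lambda>w. cnj (A * h k i w + B i * z k i w) * h k' i w)"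
      using site_Y2(1)[OF kK _ k'] by blast
    have i2: "\<And>i. i < M \<Longrightarrow> integrable P (\<lambda>w. (cnj (A * h k i w + B i * z k i w) * h k' i w) * cnj (cnj (A * h k i w + B i * z k i w) * h k' i w))"
      using site_Y2(3)[OF kK _ k'] by blast
    note r = sum_sq[OF site_indep_Y[OF kK k'(1)] i1 i2]
    have t1: "integral\<^sup>L P (\<lambda>w. (cnj (A * h k i w + B i * z k i w) * h k' i w) * cnj (cnj (A * h k i w + B i * z k i w) * h k' i w))
       - integral\<^sup>L P (\<lambda>w. cnj (A * h k i w + B i * z k i w) * h k' i w) * cnj (integral\<^sup>L P (\<lambda>w. cnj (A * h k i w + B i * z k i w) * h k' i w))
       = complex_of_real (g' * \<beta> k')" if "i \<in> {..<M}" for i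
      using site_Y2(2,4)[OF kK _ k', of i A "B i"] hatv[of i] that by simp
    have t2: "integral\<^sup>L P (\<lambda>w. cnj (A * h k i w + B i * z k i w) * h k' i w) = 0" if "i \<in> {..<M}" for i
      using site_Y2(2)[OF kK _ k', of i A "B i"] that by simp
    have "integral\<^sup>L P (\<lambda>w. S k' w * cnj (S k' w)) = (\<Sum>i<M. integral\<^sup>L P (\<lambda>w. (cnj (A * h k i w + B i * z k i w) * h k' i w) * cnj (cnj (A * h k i w + B i * z k i w) * h k' i w))
       - integral\<^sup>L P (\<lambda>w. cnj (A * h k i w + B i * z k i w) * h k' i w) * cnj (integral\<^sup>L P (\<lambda>w. cnj (A * h k i w + B i * z k i w) * h k' i w)))
       + (\<Sum>i<M. integral\<^sup>L P (\<lambda>w. cnj (A * h k i w + B i * z k i w) * h k' i w)) * cnj (\<Sum>i<M. integral\<^sup>L P (\<lambda>w. cnj (A * h k i w + B i * z k i w) * h k' i w))"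
      unfolding S_def by (rule r)
    also have "\<dots> = (\<Sum>i<M. complex_of_real (g' * \<beta> k')) + (\<Sum>i<M. (0::complex)) * cnj (\<Sum>i<M. (0::complex))"
      by (simp only: sum.cong[OF refl t1] sum.cong[OF refl t2])
    also have "\<dots> = complex_of_real (real M * g' * \<beta> k')"
      by simp
    finally show ?thesis .
  qed
  have ES3: "integral\<^sup>L P (\<lambda>w. SN w * cnj (SN w)) = complex_of_real (real M * (cmod \<Phi>)\<^sup>2 * g' * \<sigma>2)"
  proof -
    have i1: "\<And>i. i < M \<Longrightarrow> integrable P (\<lambda>w. cnj ((\<Phi> * d i) * (A * h k i w + B i * z k i w)) * n i w)"
      using site_Y3(1)[OF kK] by blast
    have i2: "\<And>i. i < M \<Longrightarrow> integrable P (\<lambda>w. (cnj ((\<Phi> * d i) * (A * h k i w + B i * z k i w)) * n i w) * cnj (cnj ((\<Phi> * d i) * (A * h k i w + B i * z k i w)) * n i w))"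
      using site_Y3(3)[OF kK] by blast
    note r = sum_sq[OF site_indep_N[OF kK] i1 i2]
    have t1: "integral\<^sup>L P (\<lambda>w. (cnj ((\<Phi> * d i) * (A * h k i w + B i * z k i w)) * n i w) * cnj (cnj ((\<Phi> * d i) * (A * h k i w + B i * z k i w)) * n i w))
       - integral\<^sup>L P (\<lambda>w. cnj ((\<Phi> * d i) * (A * h k i w + B i * z k i w)) * n i w) * cnj (integral\<^sup>L P (\<lambda>w. cnj ((\<Phi> * d i) * (A * h k i w + B i * z k i w)) * n i w))
       = complex_of_real ((cmod \<Phi>)\<^sup>2 * g' * \<sigma>2)" if "i \<in> {..<M}" for i
      using site_Y3(2,4)[OF kK, of i "\<Phi> * d i" A "B i"] hatv[of i] CC[of i] that by simp
    have t2: "integral\<^sup>L P (\<lambda>w. cnj ((\<Phi> * d i) * (A * h k i w + B i * z k i w)) * n i w) = 0" if "i \<in> {..<M}" for i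
      using site_Y3(2)[OF kK, of i "\<Phi> * d i" A "B i"] that by simp
    have "integral\<^sup>L P (\<lambda>w. SN w * cnj (SN w)) = (\<Sum>i<M. integral\<^sup>L P (\<lambda>w. (cnj ((\<Phi> * d i) * (A * h k i w + B i * z k i w)) * n i w) * cnj (cnj ((\<Phi> * d i) * (A * h k i w + B i * z k i w)) * n i w))
       - integral\<^sup>L P (\<lambda>w. cnj ((\<Phi> * d i) * (A * h k i w + B i * z k i w)) * n i w) * cnj (integral\<^sup>L P (\<lambda>w. cnj ((\<Phi> * d i) * (A * h k i w + B i * z k i w)) * n i w)))
       + (\<Sum>i<M. integral\<^sup>L P (\<lambda>w. cnj ((\<Phi> * d i) * (A * h k i w + B i * z k i w)) * n i w)) * cnj (\<Sum>i<M. integral\<^sup>L P (\<lambda>w. cnj ((\<Phi> * d i) * (A * h k i w + B i * z k i w)) * n i w))"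
      unfolding SN_def by (rule r)
    also have "\<dots> = (\<Sum>i<M. complex_of_real ((cmod \<Phi>)\<^sup>2 * g' * \<sigma>2)) + (\<Sum>i<M. (0::complex)) * cnj (\<Sum>i<M. (0::complex))"
      by (simp only: sum.cong[OF refl t1] sum.cong[OF refl t2])
    also have "\<dots> = complex_of_real (real M * (cmod \<Phi>)\<^sup>2 * g' * \<sigma>2)"
      by simp
    finally show ?thesis .
  qed
  have sqC: "integral\<^sup>L P (\<lambda>w. (cmod (C * Z w))\<^sup>2) = (cmod C)\<^sup>2 * integral\<^sup>L P (\<lambda>w. (cmod (Z w))\<^sup>2)" for C Z
    by (simp add: norm_mult power_mult_distrib)
  have sqR: "complex_of_real (integral\<^sup>L P (\<lambda>w. (cmod (Z w))\<^sup>2)) = integral\<^sup>L P (\<lambda>w. Z w * cnj (Z w))" for Z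
  proof -
    have "(\<lambda>w. Z w * cnj (Z w)) = (\<lambda>w. complex_of_real ((cmod (Z w))\<^sup>2))"
      by (rule ext) (rule complex_norm_square[symmetric])
    then show ?thesis by (simp only: integral_complex_of_real)
  qed
  define q where "q = (cmod \<Phi>)\<^sup>2"
  have qpos: "q > 0" using \<Phi>2 q_def by simp
  have cmodCf: "(cmod (Cf k'))\<^sup>2 = \<rho> * pd k' * q\<^sup>2" if "k' \<in> {1..K}" for k'
  proof -
    have pq: "\<Phi> * cnj \<Phi> = complex_of_real q" unfolding q_def by (rule complex_norm_square[symmetric])
    have "Cf k' = complex_of_real (sqrt (\<rho> * pd k') * q)"
      unfolding Cf_def by (simp only: mult.assoc pq of_real_mult)
    then have "cmod (Cf k') = sqrt (\<rho> * pd k') * q" using pd0[OF that] \<rho> qpos by (simp only: norm_of_real) simp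
    then show ?thesis using pd0[OF that] \<rho> qpos by (simp add: power_mult_distrib)
  qed
  have V1: "integral\<^sup>L P (\<lambda>w. (cmod (S k w))\<^sup>2) = real M * (a\<^sup>2 * (\<beta> k)\<^sup>2 + bb\<^sup>2 * q * \<beta> k * \<sigma>2) + (real M * a * \<beta> k)\<^sup>2"
    using sqR[of "S k"] ES1 unfolding q_def by (simp only: of_real_eq_iff)
  have V2: "integral\<^sup>L P (\<lambda>w. (cmod (S k' w))\<^sup>2) = real M * g' * \<beta> k'" if "k' \<in> {1..K}" "k' \<noteq> k" for k'
    using sqR[of "S k'"] ES2[OF that] by (simp only: of_real_eq_iff)
  have V3: "integral\<^sup>L P (\<lambda>w. (cmod (SN w))\<^sup>2) = real M * q * g' * \<sigma>2"
    using sqR[of SN] ES3 unfolding q_def by (simp only: of_real_eq_iff)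
  have EDs: "integral\<^sup>L P (sig k) = Cf k * complex_of_real (real M * a * \<beta> k)"
  proof -
    have i1: "\<And>i. i \<in> {..<M} \<Longrightarrow> integrable P (\<lambda>w. cnj (A * h k i w + B i * z k i w) * h k i w)"
      using site_Y1(1)[OF kK] by blast
    have t2: "integral\<^sup>L P (\<lambda>w. cnj (A * h k i w + B i * z k i w) * h k i w) = complex_of_real (a * \<beta> k)" if "i \<in> {..<M}" for i
      using site_Y1(2)[OF kK, of i A "B i"] AA(2) that by (simp add: A_def)
    have e: "sig k = (\<lambda>w. Cf k * S k w)" by (rule ext) (rule sig_eq)
    have "integral\<^sup>L P (sig k) = Cf k * integral\<^sup>L P (S k)" unfolding e by simp
    also have "integral\<^sup>L P (S k) = (\<Sum>i<M. integral\<^sup>L P (\<lambda>w. cnj (A * h k i w + B i * z k i w) * h k i w))"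
      unfolding S_def by (rule Bochner_Integration.integral_sum[OF i1])
    also have "\<dots> = (\<Sum>i<M. complex_of_real (a * \<beta> k))" by (rule sum.cong[OF refl t2])
    finally show ?thesis by simp
  qed
  have g'eq: "g' = a * \<beta> k"
  proof -
    have bb2: "bb\<^sup>2 = \<rho> * real K * pp k * (\<beta> k)\<^sup>2 / D\<^sup>2"
      unfolding bb_def using \<rho> ppk Kpos by (simp add: power_divide power_mult_distrib)
    have Dq: "D = \<rho> * \<beta> k * real K * pp k * q + \<sigma>2" unfolding D_def q_def ..
    have aq: "a = \<rho> * \<beta> k * real K * pp k * q / D" unfolding a_def q_def ..
    have "g' = (\<rho> * real K * pp k * (\<beta> k)\<^sup>2 * q) * (\<rho> * \<beta> k * real K * pp k * q + \<sigma>2) / D\<^sup>2"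
      unfolding g'_def bb2 aq q_def[symmetric] using Dpos by (simp add: field_simps power2_eq_square)
    also have "\<dots> = (\<rho> * real K * pp k * (\<beta> k)\<^sup>2 * q) / D"
      unfolding Dq[symmetric] using Dpos by (simp add: power2_eq_square)
    also have "\<dots> = a * \<beta> k" unfolding aq using Dpos by (simp add: power2_eq_square field_simps)
    finally show ?thesis .

  qed
  have Gpos: "g' > 0" unfolding g'eq a_def using Dpos \<beta>k ppk \<sigma> \<rho> \<Phi>2 Kpos by simp
  define Sg where "Sg = (\<Sum>j=1..K. pd j * \<beta> j)"
  have Sg0: "Sg \<ge> 0" unfolding Sg_def using pd0 assms(9) by (intro sum_nonneg) (simp add: less_imp_le)
  have Ssplit: "Sg = pd k * \<beta> k + (\<Sum>j\<in>{1..K} - {k}. pd j * \<beta> j)"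
    unfolding Sg_def using kK by (simp add: sum.remove)
  have num: "(cmod (integral\<^sup>L P (sig k)))\<^sup>2 = \<rho> * pd k * q\<^sup>2 * (real M * g')\<^sup>2"
    unfolding EDs g'eq using cmodCf[OF kK] by (simp add: norm_mult power_mult_distrib abs_mult)
  have Ls: "integral\<^sup>L P (\<lambda>w. (cmod (sig k w))\<^sup>2) - (cmod (integral\<^sup>L P (sig k)))\<^sup>2 = \<rho> * q\<^sup>2 * real M * g' * (pd k * \<beta> k)"
  proof -
    have "integral\<^sup>L P (\<lambda>w. (cmod (sig k w))\<^sup>2) = \<rho> * pd k * q\<^sup>2 * (real M * (a\<^sup>2 * (\<beta> k)\<^sup>2 + bb\<^sup>2 * q * \<beta> k * \<sigma>2) + (real M * a * \<beta> k)\<^sup>2)"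
      unfolding sig_eq sqC cmodCf[OF kK] V1 ..
    moreover have e1: "a\<^sup>2 * (\<beta> k)\<^sup>2 + bb\<^sup>2 * q * \<beta> k * \<sigma>2 = \<beta> k * g'"
      unfolding g'_def q_def by (simp add: algebra_simps power2_eq_square)
    moreover have e2: "real M * a * \<beta> k = real M * g'" by (simp add: g'eq)
    ultimately show ?thesis unfolding num by (simp only: e1 e2) (simp add: algebra_simps)
  qed
  have UI: "(\<Sum>k'\<in>{1..K} - {k}. integral\<^sup>L P (\<lambda>w. (cmod (sig k' w))\<^sup>2)) = \<rho> * q\<^sup>2 * real M * g' * (\<Sum>j\<in>{1..K} - {k}. pd j * \<beta> j)"
  proof -
    have "(\<Sum>k'\<in>{1..K} - {k}. integral\<^sup>L P (\<lambda>w. (cmod (sig k' w))\<^sup>2)) = (\<Sum>k'\<in>{1..K} - {k}. \<rho> * q\<^sup>2 * real M * g' * (pd k' * \<beta> k'))"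
    proof (rule sum.cong[OF refl])
      fix k' assume "k' \<in> {1..K} - {k}"
      then have "k' \<in> {1..K}" "k' \<noteq> k" by auto
      then show "integral\<^sup>L P (\<lambda>w. (cmod (sig k' w))\<^sup>2) = \<rho> * q\<^sup>2 * real M * g' * (pd k' * \<beta> k')"
        unfolding sig_eq sqC using cmodCf V2 by simp
    qed
    then show ?thesis by (simp add: sum_distrib_left)
  qed
  have NN: "integral\<^sup>L P (\<lambda>w. (cmod (\<Sum>i<M. cnj (c k i w) * n i w))\<^sup>2) = real M * q * g' * \<sigma>2"
    unfolding noise_eq V3 ..
  have den: "(integral\<^sup>L P (\<lambda>w. (cmod (sig k w))\<^sup>2) - (cmod (integral\<^sup>L P (sig k)))\<^sup>2)
      + (\<Sum>k'\<in>{1..K} - {k}. integral\<^sup>L P (\<lambda>w. (cmod (sig k' w))\<^sup>2))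
      + integral\<^sup>L P (\<lambda>w. (cmod (\<Sum>i<M. cnj (c k i w) * n i w))\<^sup>2) = real M * q * g' * (\<rho> * q * Sg + \<sigma>2)"
    unfolding Ls UI NN Ssplit by (simp add: algebra_simps power2_eq_square)
  have Mpos: "real M > 0" using assms(2) by simp
  have frac: "(cmod (integral\<^sup>L P (sig k)))\<^sup>2 / (real M * q * g' * (\<rho> * q * Sg + \<sigma>2))
     = (real M * pd k * \<rho> * real K * pp k * (\<beta> k)\<^sup>2 * (cmod \<Phi>)\<^sup>2) /
             ((Sg + \<sigma>2 / ((cmod \<Phi>)\<^sup>2 * \<rho>)) * (\<rho> * real K * pp k * \<beta> k * (cmod \<Phi>)\<^sup>2 + \<sigma>2))"
  proof -
    have p1: "\<rho> * q * Sg + \<sigma>2 > 0" using \<rho> qpos Sg0 \<sigma> by (simp add: add_nonneg_pos)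
    have G: "g' = \<rho> * (\<beta> k)\<^sup>2 * real K * pp k * q / D" unfolding g'eq a_def q_def by (simp add: power2_eq_square)
    have D': "\<rho> * real K * pp k * \<beta> k * (cmod \<Phi>)\<^sup>2 + \<sigma>2 = D" unfolding D_def by (simp add: mult_ac)
    have L: "(cmod (integral\<^sup>L P (sig k)))\<^sup>2 / (real M * q * g' * (\<rho> * q * Sg + \<sigma>2))
        = \<rho> * pd k * q * real M * g' / (\<rho> * q * Sg + \<sigma>2)"
    proof -
      have nz: "real M * q * g' \<noteq> 0" using qpos Mpos Gpos by simp
      have "(cmod (integral\<^sup>L P (sig k)))\<^sup>2 / (real M * q * g' * (\<rho> * q * Sg + \<sigma>2))
          = (\<rho> * pd k * q * real M * g' * (real M * q * g')) / ((\<rho> * q * Sg + \<sigma>2) * (real M * q * g'))"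
        unfolding num by (simp add: power2_eq_square mult_ac)
      also have "\<dots> = \<rho> * pd k * q * real M * g' / (\<rho> * q * Sg + \<sigma>2)"
        by (rule mult_divide_mult_cancel_right[OF nz])
      finally show ?thesis .
    qed
    have Dq: "\<rho> * real K * pp k * \<beta> k * q + \<sigma>2 = D" using D' unfolding q_def .
    have R: "(real M * pd k * \<rho> * real K * pp k * (\<beta> k)\<^sup>2 * (cmod \<Phi>)\<^sup>2) /
             ((Sg + \<sigma>2 / ((cmod \<Phi>)\<^sup>2 * \<rho>)) * (\<rho> * real K * pp k * \<beta> k * (cmod \<Phi>)\<^sup>2 + \<sigma>2))
        = (real M * pd k * \<rho> * real K * pp k * (\<beta> k)\<^sup>2 * q) / ((Sg + \<sigma>2 / (q * \<rho>)) * D)"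
      unfolding q_def[symmetric] Dq ..
    have R2: "(Sg + \<sigma>2 / (q * \<rho>)) = (\<rho> * q * Sg + \<sigma>2) / (q * \<rho>)"
      using qpos \<rho> by (simp add: field_simps)
    show ?thesis unfolding L R R2 unfolding G using p1 Dpos qpos \<rho> Mpos
      by (simp add: field_simps power2_eq_square)
  qed
  have "uplink_rate P M K T TU \<Phi> \<rho> d pd h n c k = real TU / real T * log 2 (1 +
             (real M * pd k * \<rho> * real K * pp k * (\<beta> k)\<^sup>2 * (cmod \<Phi>)\<^sup>2) /
             (((\<Sum>j=1..K. pd j * \<beta> j) + \<sigma>2 / ((cmod \<Phi>)\<^sup>2 * \<rho>))
               * (\<rho> * real K * pp k * \<beta> k * (cmod \<Phi>)\<^sup>2 + \<sigma>2)))"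
    unfolding rate den frac unfolding Sg_def ..
  then show ?thesis unfolding c_def by simp
qed

end
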